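(* Let $G=(S,r)$ be a ranked set with $|S|=n$. Let $S(G;u,v)=\sum_{A\subseteq S}u^{r(S)-r(A)}v^{|A|-r(A)}$ be its corank-nullity generating function, and let $T(G;x,y)=S(G;x-1,y-1)$ be its Tutte polynomial. Write $T(G;x,y)=\sum_{i,j\in\mathbb{Z}} b_{i,j}x^iy^j$. Then: (1) for every integer $k$ with $0\le k<n$, $$\sum_{i=0}^{k}\sum_{j=0}^{k-i}(-1)^j\binom{k-i}{j}b_{i,j}=0;$$ (2) for $k=n$, $$\sum_{i=0}^{n}\sum_{j=0}^{n-i}(-1)^j\binom{n-i}{j}b_{i,j}=(-1)^{n-r(S)}.$$
   Context: A ranked set is a pair $G=(S,r)$ where $S$ is a finite set and $r:2^S\to\mathbb{Z}$ is a function satisfying: $r(\emptyset)=0$; $r(A)\le r(S)$ for all $A\subseteq S$; and $r(A)\le |A|$ for all $A\subseteq S$. These conditions ensure $T(G;x,y)$ is a polynomial in $x,y$. *)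

theory Defs
  imports "HOL-Computational_Algebra.Polynomial"
begin

definition ranked_set :: "'a set \<Rightarrow> ('a set \<Rightarrow> int) \<Rightarrow> bool" where
  "ranked_set S r \<longleftrightarrow> finite S \<and> r {} = 0 \<and>
     (\<forall>A. A \<subseteq> S \<longrightarrow> r A \<le> r S) \<and>
     (\<forall>A. A \<subseteq> S \<longrightarrow> r A \<le> int (card A))"

text \<open>Bivariate integer polynomials are represented as int poly poly:
  the outer variable is the second variable (v resp. y), the inner
  variable is the first one (u resp. x). The exponents r S - r A and
  |A| - r A are nonnegative for ranked sets, so nat does not truncate.\<close>
definition corank_nullity_poly :: "'a set \<Rightarrow> ('a set \<Rightarrow> int) \<Rightarrow> int poly poly" where
  "corank_nullity_poly S r =
     (\<Sum>A\<in>Pow S. [: monom 1 (nat (r S - r A)) :] * monom 1 (nat (int (card A) - r A)))"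

definition tutte_poly :: "'a set \<Rightarrow> ('a set \<Rightarrow> int) \<Rightarrow> int poly poly" where
  "tutte_poly S r =
     pcompose (map_poly (\<lambda>p. pcompose p [:-1, 1:]) (corank_nullity_poly S r)) [: [:-1:], 1 :]"

definition tutte_coeff :: "'a set \<Rightarrow> ('a set \<Rightarrow> int) \<Rightarrow> nat \<Rightarrow> nat \<Rightarrow> int" where
  "tutte_coeff S r i j = coeff (coeff (tutte_poly S r) j) i"

end

theory Submission
  imports Defs "HOL-Computational_Algebra.Computational_Algebra"
begin

definition W :: "rat fps" where "W = Abs_fps (\<lambda>_. 1)"

lemma W_inv: "(1 - fps_X) * W = 1"
proof -
  have "inverse (1 - fps_X) = W" unfolding W_def by (rule fps_inverse_one_minus_fps_X)
  moreover have "(1 - fps_X) * inverse (1 - fps_X :: rat fps) = 1"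
    by (rule inverse_mult_eq_1') simp
  ultimately show ?thesis by simp
qed

lemma W_pow_nth: "(W ^ Suc j) $ m = of_nat ((m + j) choose j)"
proof (induction j arbitrary: m)
  case 0
  then show ?case by (simp add: W_def)
next
  case (Suc j)
  have "(W ^ Suc (Suc j)) $ m = (\<Sum>i=0..m. W $ i * (W ^ Suc j) $ (m - i))"
    by (simp add: fps_mult_nth)
  also have "\<dots> = (\<Sum>i=0..m. of_nat ((m - i + j) choose j))"
  proof (intro sum.cong refl)
    fix i assume "i \<in> {0..m}"
    have "W $ i = 1" by (simp add: W_def)
    then show "W $ i * (W ^ Suc j) $ (m - i) = of_nat ((m - i + j) choose j)"
      using Suc[of "m - i"] by simp
  qed
  also have "\<dots> = of_nat (\<Sum>i=0..m. ((m - i + j) choose j))" by simp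
  also have "(\<Sum>i=0..m. ((m - i + j) choose j)) = (\<Sum>i\<le>m. ((j + i) choose i))"
  proof -
    have "(\<Sum>i=0..m. ((m - i + j) choose j)) = (\<Sum>i=0..m. ((m - i + j) choose (m - i)))"
      by (intro sum.cong refl) (metis binomial_symmetric diff_add_inverse2 le_add2)
    also have "\<dots> = (\<Sum>i\<le>m. ((j + i) choose i))"
      by (rule sum.reindex_bij_witness[of _ "\<lambda>i. m - i" "\<lambda>i. m - i"]) (auto simp: add.commute)
    finally show ?thesis .
  qed
  also have "\<dots> = Suc (j + m) choose m" by (rule sum_choose_lower)
  also have "\<dots> = (m + Suc j) choose Suc j"
    by (metis add.commute add_Suc_right binomial_symmetric le_add2 add_diff_cancel_left')
  finally show ?case .
qed

definition e1 :: "int poly \<Rightarrow> rat fps" where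
  "e1 p = fps_of_poly (map_poly of_int p)"

lemma e1_nth: "e1 p $ i = of_int (coeff p i)"
  by (simp add: e1_def coeff_map_poly)

lemma e1_0 [simp]: "e1 0 = 0" by (simp add: e1_def)

definition EV :: "int poly poly \<Rightarrow> rat fps" where
  "EV P = W * poly (map_poly e1 P) (- fps_X * W)"

lemma poly_altdef_le:
  fixes x :: "'a::comm_semiring_1"
  assumes "degree p \<le> N"
  shows "poly p x = (\<Sum>i\<le>N. coeff p i * x ^ i)"
proof -
  have "poly p x = (\<Sum>i\<le>degree p. coeff p i * x ^ i)" by (rule poly_altdef)
  also have "\<dots> = (\<Sum>i\<le>N. coeff p i * x ^ i)"
    by (rule sum.mono_neutral_left) (use assms in \<open>auto simp: coeff_eq_0\<close>)
  finally show ?thesis .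
qed

lemma term_nth:
  "(W * e1 c * (- fps_X * W) ^ j) $ k =
     of_int (\<Sum>i=0..k. (-1)^j * int ((k - i) choose j) * coeff c i)"
proof -
  have eq: "W * e1 c * (- fps_X * W) ^ j = fps_const ((-1)^j) * (fps_X ^ j * (e1 c * W ^ Suc j))"
    by (simp add: power_mult_distrib fps_const_neg[symmetric] fps_const_power[symmetric] 
          power_minus' algebra_simps)
  have "(fps_X ^ j * (e1 c * W ^ Suc j)) $ k = (\<Sum>i=0..k. of_int (coeff c i) * of_nat ((k - i) choose j))"
  proof (cases "j \<le> k")
    case True
    have "(fps_X ^ j * (e1 c * W ^ Suc j)) $ k = (e1 c * W ^ Suc j) $ (k - j)"
      using True by (simp add: fps_X_power_mult_nth)
    also have "\<dots> = (\<Sum>i=0..k-j. of_int (coeff c i) * of_nat ((k - j - i + j) choose j))"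
      by (simp only: fps_mult_nth e1_nth W_pow_nth)
    also have "\<dots> = (\<Sum>i=0..k-j. of_int (coeff c i) * of_nat ((k - i) choose j))"
      by (intro sum.cong refl) (use True in auto)
    also have "\<dots> = (\<Sum>i=0..k. of_int (coeff c i) * of_nat ((k - i) choose j))"
      by (rule sum.mono_neutral_left) auto
    finally show ?thesis .
  next
    case False
    then have "\<forall>i\<in>{0..k}. (k - i) choose j = 0" by (auto intro: binomial_eq_0)
    with False show ?thesis by (auto simp: fps_X_power_mult_nth binomial_eq_0 intro!: sum.neutral)
  qed
  then show ?thesis
    unfolding eq fps_mult_left_const_nth by (simp add: sum_distrib_left algebra_simps)
qed

lemma EV_nth:
  "EV P $ k = of_int (\<Sum>i=0..k. \<Sum>j=0..k-i. (-1)^j * int ((k-i) choose j) * coeff (coeff P j) i)"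
proof -
  define M where "M = max k (degree P)"
  define t where "t = (\<lambda>i j. (-1::int)^j * int ((k-i) choose j) * coeff (coeff P j) i)"
  have dg: "degree (map_poly e1 P) \<le> M"
    using map_poly_degree_leq[of e1 P] unfolding M_def by linarith
  have "EV P = (\<Sum>j\<le>M. W * e1 (coeff P j) * (- fps_X * W) ^ j)"
    unfolding EV_def poly_altdef_le[OF dg]
    by (simp add: coeff_map_poly sum_distrib_left algebra_simps)
  then have "EV P $ k = (\<Sum>j\<le>M. of_int (\<Sum>i=0..k. t i j))"
    by (simp only: fps_sum_nth term_nth t_def)
  also have "\<dots> = of_int (\<Sum>i=0..k. \<Sum>j\<le>M. t i j)"
    by (simp add: sum.swap[of _ "{0..k}"])
  also have "(\<Sum>i=0..k. \<Sum>j\<le>M. t i j) = (\<Sum>i=0..k. \<Sum>j=0..k-i. t i j)"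
  proof -
    have "(\<Sum>j\<le>M. t i j) = (\<Sum>j=0..k-i. t i j)" if "i \<in> {0..k}" for i
    proof (rule sum.mono_neutral_right)
      show "finite {..M}" by simp
      show "{0..k-i} \<subseteq> {..M}" by (auto simp: M_def)
      show "\<forall>j\<in>{..M} - {0..k-i}. t i j = 0"
        by (auto simp: t_def coeff_eq_0 binomial_eq_0)
    qed
    then show ?thesis by (rule sum.cong[OF refl])
  qed
  finally show ?thesis by (simp add: t_def)
qed

definition hom :: "('a::comm_ring_1 \<Rightarrow> 'b::comm_ring_1) \<Rightarrow> bool" where
  "hom h \<longleftrightarrow> h 0 = 0 \<and> h 1 = 1 \<and> (\<forall>a b. h (a + b) = h a + h b) \<and> (\<forall>a b. h (a * b) = h a * h b)"

lemma hom_D: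
  assumes "hom h"
  shows "h 0 = 0" "h 1 = 1" "h (a + b) = h a + h b" "h (a * b) = h a * h b"
  using assms by (auto simp: hom_def)

lemma hom_power: "hom h \<Longrightarrow> h (x ^ n) = h x ^ n"
  by (induction n) (auto simp: hom_D)

lemma hom_sum: "hom h \<Longrightarrow> h (sum f A) = (\<Sum>x\<in>A. h (f x))"
  by (induction A rule: infinite_finite_induct) (auto simp: hom_D)

lemma hom_comp: "hom h \<Longrightarrow> hom g \<Longrightarrow> hom (h \<circ> g)"
  by (simp add: hom_def)

lemma map_poly_add_h:
  assumes "hom h"
  shows "map_poly h (p + q) = map_poly h p + map_poly h q"
  by (intro poly_eqI) (simp add: coeff_map_poly hom_D[OF assms])

lemma map_poly_mult_h:
  assumes "hom h"
  shows "map_poly h (p * q) = map_poly h p * map_poly h q"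
proof (induction p)
  case 0
  then show ?case by simp
next
  case (pCons a p)
  have "map_poly h (pCons a p * q) = map_poly h (smult a q) + map_poly h (pCons 0 (p * q))"
    by (simp add: map_poly_add_h[OF assms])
  also have "\<dots> = smult (h a) (map_poly h q) + pCons 0 (map_poly h p * map_poly h q)"
    by (simp add: map_poly_smult map_poly_pCons hom_D[OF assms] pCons.IH)
  also have "\<dots> = map_poly h (pCons a p) * map_poly h q"
    by (simp add: map_poly_pCons hom_D[OF assms])
  finally show ?case .
qed

lemma hom_map_poly: "hom h \<Longrightarrow> hom (map_poly h)"
  unfolding hom_def[of "map_poly h"]
  by (simp add: map_poly_add_h map_poly_mult_h hom_D)

lemma map_poly_const_h: "hom h \<Longrightarrow> map_poly h [:c:] = [:h c:]"
  by (simp add: map_poly_pCons hom_D)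

lemma map_poly_pcompose_h:
  assumes "hom h"
  shows "map_poly h (pcompose p q) = pcompose (map_poly h p) (map_poly h q)"
proof (induction p)
  case 0
  then show ?case by simp
next
  case (pCons a p)
  show ?case
    by (simp add: pcompose_pCons map_poly_add_h[OF assms] map_poly_mult_h[OF assms]
        map_poly_const_h[OF assms] map_poly_pCons hom_D[OF assms] pCons.IH)
qed

lemma hom_of_int: "hom (of_int :: int \<Rightarrow> rat)"
  by (simp add: hom_def)

lemma hom_fps_of_poly: "hom (fps_of_poly :: rat poly \<Rightarrow> rat fps)"
  by (simp add: hom_def fps_of_poly_add fps_of_poly_mult)

lemma hom_e1: "hom e1"
proof -
  have "e1 = fps_of_poly \<circ> map_poly of_int" by (auto simp: e1_def fun_eq_iff)
  then show ?thesis using hom_comp[OF hom_fps_of_poly hom_map_poly[OF hom_of_int]] by simp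
qed

definition g1 :: "int poly \<Rightarrow> int poly" where "g1 p = pcompose p [:-1, 1:]"

lemma hom_g1: "hom g1"
  by (simp add: hom_def g1_def pcompose_add pcompose_mult pcompose_1)

lemma e1g1_monom: "(e1 \<circ> g1) (monom 1 a) = (fps_X - 1) ^ a"
proof -
  have "(e1 \<circ> g1) (monom 1 a) = (e1 \<circ> g1) ([:0,1:] ^ a)" by (simp add: monom_altdef)
  also have "\<dots> = ((e1 \<circ> g1) [:0,1:]) ^ a" by (rule hom_power[OF hom_comp[OF hom_e1 hom_g1]])
  also have "(e1 \<circ> g1) [:0,1:] = fps_X - 1"
    by (simp add: g1_def pcompose_pCons e1_def map_poly_pCons fps_of_poly_pCons
          fps_of_poly_const)
  finally show ?thesis .
qed

lemma EV_tutte: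
  "EV (tutte_poly S r) = W * (\<Sum>A\<in>Pow S. (fps_X - 1) ^ nat (r S - r A) *
       (- fps_X * W - 1) ^ nat (int (card A) - r A))"
proof -
  define Y where "Y = - fps_X * W"
  define C where "C = corank_nullity_poly S r"
  have T: "tutte_poly S r = pcompose (map_poly g1 C) [:[:-1:], 1:]"
    by (simp add: tutte_poly_def C_def g1_def[abs_def])
  have Q: "map_poly e1 [:[:-1:], 1:] = [:-1, 1:]"
    by (simp add: map_poly_pCons e1_def fps_of_poly_const)
  have hg: "hom (e1 \<circ> g1)" by (rule hom_comp[OF hom_e1 hom_g1])
  have g0: "g1 0 = 0" by (simp add: g1_def)
  have "map_poly e1 (tutte_poly S r) = pcompose (map_poly (e1 \<circ> g1) C) [:-1, 1:]"
    unfolding T map_poly_pcompose_h[OF hom_e1] Q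
    by (simp add: map_poly_map_poly g0)
  then have "poly (map_poly e1 (tutte_poly S r)) Y = poly (map_poly (e1 \<circ> g1) C) (Y - 1)"
    by (simp add: poly_pcompose)
  also have "map_poly (e1 \<circ> g1) C = (\<Sum>A\<in>Pow S. [:(fps_X - 1) ^ nat (r S - r A):] *
       monom 1 (nat (int (card A) - r A)))"
    unfolding C_def corank_nullity_poly_def hom_sum[OF hom_map_poly[OF hg]]
    using e1g1_monom hom_D[OF hg]
    by (simp add: map_poly_smult[of "e1 \<circ> g1", OF hom_D(1)[OF hg] hom_D(4)[OF hg]]
        map_poly_monom del: comp_apply)
  finally show ?thesis
    by (simp add: EV_def Y_def poly_sum poly_monom)
qed

lemma sum_Pow_power:
  fixes c :: "'b::comm_ring_1"
  assumes "finite S"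
  shows "(\<Sum>A\<in>Pow S. c ^ card A) = (1 + c) ^ card S"
  using assms
proof (induction S rule: finite_induct)
  case empty
  then show ?case by simp
next
  case (insert x F)
  have disj: "Pow F \<inter> insert x ` Pow F = {}" using insert by auto
  have inj: "inj_on (insert x) (Pow F)"
    using insert by (auto simp: inj_on_def)
  have "(\<Sum>A\<in>Pow (insert x F). c ^ card A) =
        (\<Sum>A\<in>Pow F. c ^ card A) + (\<Sum>A\<in>insert x ` Pow F. c ^ card A)"
    unfolding Pow_insert using insert disj by (intro sum.union_disjoint) auto
  also have "(\<Sum>A\<in>insert x ` Pow F. c ^ card A) = (\<Sum>A\<in>Pow F. c ^ card (insert x A))"
    by (rule sum.reindex[OF inj, unfolded comp_def])
  also have "\<dots> = (\<Sum>A\<in>Pow F. c * c ^ card A)"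
  proof (intro sum.cong refl)
    fix A assume "A \<in> Pow F"
    then have "finite A" "x \<notin> A" using insert finite_subset by auto
    then show "c ^ card (insert x A) = c * c ^ card A" by simp
  qed
  also have "\<dots> = c * (\<Sum>A\<in>Pow F. c ^ card A)" by (simp add: sum_distrib_left)
  finally show ?case using insert by (simp add: sum_distrib_left algebra_simps)
qed

lemma term_algebra:
  fixes u w :: "'b::comm_ring_1"
  assumes uw: "u * w = 1" and e: "a + s = b + R"
  shows "w * (- u) ^ a * (- w) ^ b = (-1) ^ (R + s) * u ^ R * w ^ Suc s"
proof -
  have p: "u ^ a * w ^ b = u ^ R * w ^ s"
  proof -
    have "u ^ a * w ^ b = u ^ a * w ^ b * (u * w) ^ s" using uw by simp
    also have "\<dots> = u ^ (a + s) * w ^ (b + s)" by (simp add: power_add power_mult_distrib algebra_simps)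
    also have "\<dots> = (u * w) ^ b * (u ^ R * w ^ s)" using e
      by (simp add: power_add power_mult_distrib algebra_simps)
    finally show ?thesis using uw by simp
  qed
  have sg: "(-1::'b) ^ (a + b) = (-1) ^ (R + s)"
  proof -
    have ex: "a + s + (b + s) = R + s + 2 * b" using e by linarith
    have "(-1::'b) ^ (a + b) = (-1) ^ (a + b) * ((-1) ^ 2) ^ s" by simp
    also have "\<dots> = (-1) ^ (a + s + (b + s))" by (simp add: power_add power_mult[symmetric] algebra_simps)
    also have "\<dots> = (-1) ^ (R + s + 2 * b)" by (simp only: ex)
    also have "\<dots> = (-1) ^ (R + s)" by (simp add: power_add power_mult)
    finally show ?thesis .
  qed
  have "w * (- u) ^ a * (- w) ^ b = (-1) ^ (a + b) * (u ^ a * w ^ b) * w"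
    by (simp add: power_minus' power_add algebra_simps)
  also have "\<dots> = (-1) ^ (R + s) * u ^ R * w ^ Suc s" by (simp add: p sg algebra_simps)
  finally show ?thesis .
qed

lemma EV_tutte_closed:
  assumes rs: "ranked_set S r"
  shows "EV (tutte_poly S r) = (-1) ^ (nat (r S) + card S) *
           (fps_X ^ card S * ((1 - fps_X) ^ nat (r S) * W ^ Suc (card S)))"
proof -
  define u :: "rat fps" where "u = 1 - fps_X"
  have uw: "u * W = 1" using W_inv by (simp add: u_def)
  have fin: "finite S" and r0: "r {} = 0" and rle: "\<And>A. A \<subseteq> S \<Longrightarrow> r A \<le> r S"
    and rc: "\<And>A. A \<subseteq> S \<Longrightarrow> r A \<le> int (card A)"
    using rs by (auto simp: ranked_set_def)
  have rS: "r S \<ge> 0" using rle[of "{}"] r0 by simp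
  have X1: "fps_X - 1 = - u" by (simp add: u_def)
  have Y1: "- fps_X * W - 1 = - W"
  proof -
    have "- fps_X * W - 1 = - fps_X * W - u * W" using uw by simp
    also have "\<dots> = - W" by (simp add: u_def algebra_simps)
    finally show ?thesis .
  qed
  have "EV (tutte_poly S r) = (\<Sum>A\<in>Pow S. W * (- u) ^ nat (r S - r A) * (- W) ^ nat (int (card A) - r A))"
    unfolding EV_tutte X1 Y1 by (simp add: sum_distrib_left algebra_simps)
  also have "\<dots> = (\<Sum>A\<in>Pow S. (-1) ^ (nat (r S) + card A) * u ^ nat (r S) * W ^ Suc (card A))"
  proof (intro sum.cong refl term_algebra[OF uw])
    fix A assume "A \<in> Pow S"
    then have "r A \<le> r S" "r A \<le> int (card A)" using rle rc by auto
    then show "nat (r S - r A) + card A = nat (int (card A) - r A) + nat (r S)"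
      using rS by linarith
  qed
  also have "\<dots> = (-1) ^ nat (r S) * u ^ nat (r S) * W * (\<Sum>A\<in>Pow S. (- W) ^ card A)"
    by (simp add: sum_distrib_left power_add power_minus' algebra_simps)
  also have "(\<Sum>A\<in>Pow S. (- W) ^ card A) = (1 - W) ^ card S"
    using sum_Pow_power[OF fin, of "- W"] by simp
  also have "1 - W = - fps_X * W" using uw by (simp add: u_def algebra_simps)
  finally show ?thesis
    by (simp add: u_def power_add power_minus' power_mult_distrib algebra_simps)
qed

lemma neg1_pow_nth: "((-1::rat fps) ^ m * G) $ k = (-1) ^ m * G $ k"
  by (induction m arbitrary: G) (simp_all add: mult.assoc[symmetric])

theorem theorem3p1:
  fixes S :: "'a set" and r :: "'a set \<Rightarrow> int" and n :: nat
  assumes "ranked_set S r" and "card S = n"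
  shows "(\<forall>k<n. (\<Sum>i=0..k. \<Sum>j=0..k-i.
            (-1::int)^j * int ((k-i) choose j) * tutte_coeff S r i j) = 0)
       \<and> (\<Sum>i=0..n. \<Sum>j=0..n-i.
            (-1::int)^j * int ((n-i) choose j) * tutte_coeff S r i j)
         = (-1::int) ^ nat (int n - r S)"
proof -
  define L where "L = (\<lambda>k. (\<Sum>i=0..k. \<Sum>j=0..k-i.
            (-1::int)^j * int ((k-i) choose j) * tutte_coeff S r i j))"
  define R where "R = nat (r S)"
  define F :: "rat fps" where "F = (1 - fps_X) ^ R * W ^ Suc n"
  have key: "rat_of_int (L k) = (-1) ^ (R + n) * (if k < n then 0 else F $ (k - n))" for k
  proof -
    have "rat_of_int (L k) = EV (tutte_poly S r) $ k"
      by (simp add: EV_nth L_def tutte_coeff_def)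
    also have "\<dots> = (-1) ^ (R + n) * (fps_X ^ n * F) $ k"
      unfolding EV_tutte_closed[OF assms(1)] neg1_pow_nth by (simp add: R_def F_def assms(2))
    finally show ?thesis by (simp add: fps_X_power_mult_nth)
  qed
  have F0: "F $ 0 = 1" by (simp add: F_def fps_power_zeroth W_def)
  have rS: "0 \<le> r S" "r S \<le> int n"
    using assms by (auto simp: ranked_set_def)
  have part1: "\<forall>k<n. L k = 0"
  proof (intro allI impI)
    fix k assume "k < n"
    then have "rat_of_int (L k) = 0" using key[of k] by simp
    then show "L k = 0" by simp
  qed
  have "rat_of_int (L n) = (-1) ^ (R + n)" using key[of n] F0 by simp
  then have "L n = (-1) ^ (R + n)" by (metis of_int_eq_iff of_int_minus of_int_1 of_int_power)
  also have "(-1::int) ^ (R + n) = (-1) ^ nat (int n - r S)"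
  proof -
    have e: "R + n = nat (int n - r S) + 2 * R" using rS by (simp add: R_def)
    show ?thesis unfolding e by (simp add: power_add power_mult)
  qed
  finally show ?thesis using part1 unfolding L_def by simp
qed

end
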